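(* For any $\phi\in\mathrm{Hom}(C(X,\mathbb{Z}),\mathbb{Z})$ with $\phi(1)=0$, there exist a set of horizontal edges $\mathcal H$ (possibly containing several edges between the same pair of vertices, hence possibly bigger than the maximal set) and a choice function $\tau$ such that $\varphi_{\tau,\mathcal H}=\phi$.
   Context: Let $(X,d)$ be an infinite compact ultrametric space, identified with the boundary $\partial\mathcal{T}$ (infinite paths from the root) of its Michon tree $\mathcal{T}=(\mathcal{T}^{(0)},\mathcal{T}^{(1)})$; $K_0(C(X))\cong C(X,\mathbb{Z})$, spanned by the indicator functions $\chi_v$ of the sets of paths through vertices $v$. For a vertex $v$ of level $n$, $\mathcal{T}^{(0)}(v)$ denotes its successors at level $n+1$; horizontal edges of level $n+1$ join distinct vertices of some $\mathcal{T}^{(0)}(v)$. A choice function $\tau:\mathcal{T}^{(0)}\to\partial\mathcal{T}$ satisfies: $\tau(v)$ passes through $v$, and if $w\prec v$ then $\tau(w)=\tau(v)$ iff $\tau(w)$ passes through $v$. Given an oriented set of horizontal edges $\mathcal H=\mathcal H^+\cup\mathcal H^-$ and $\tau$, the even Fredholm module on $\ell^2(\mathcal H^+)\oplus\ell^2(\mathcal H^-)$ with representation $\pi_\tau(f)\psi(h)=f(\tau(s(h)))\psi(h)$ and $F$ having off-diagonal part $T1_h=1_{h^{\mathrm{op}}}$ defines via the Connes pairing the homomorphism $\varphi_{\tau,\mathcal H}:C(X,\mathbb{Z})\to\mathbb{Z}$, $\varphi_{\tau,\mathcal H}(\chi_v)=\sum_{h\in\mathcal H^+}\big(\chi_v(\tau(s(h)))-\chi_v(\tau(r(h)))\big)$.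 One always has $\varphi_{\tau,\mathcal H}(1)=0$. *)

theory Defs
  imports Main "HOL-Library.Sublist"
begin

text \<open>A rooted, locally finite tree without leaves, encoded as a prefix-closed set
  of finite words.\<close>

definition succs :: "'a list set \<Rightarrow> 'a list \<Rightarrow> 'a list set" where
  "succs T v = {v @ [a] | a. v @ [a] \<in> T}"

definition is_tree :: "'a list set \<Rightarrow> bool" where
  "is_tree T \<longleftrightarrow> [] \<in> T
     \<and> (\<forall>v a. v @ [a] \<in> T \<longrightarrow> v \<in> T)
     \<and> (\<forall>v\<in>T. finite (succs T v) \<and> succs T v \<noteq> {})"

definition pref :: "(nat \<Rightarrow> 'a) \<Rightarrow> nat \<Rightarrow> 'a list" where
  "pref p n = map p [0..<n]"

definition boundary :: "'a list set \<Rightarrow> (nat \<Rightarrow> 'a) set" where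
  "boundary T = {p. \<forall>n. pref p n \<in> T}"

definition through :: "(nat \<Rightarrow> 'a) \<Rightarrow> 'a list \<Rightarrow> bool" where
  "through p v \<longleftrightarrow> pref p (length v) = v"

text \<open>C(X,Z) for X the boundary: continuous (= locally constant) integer valued
  functions on the boundary (product topology, discrete letters), normalised to
  be 0 off the boundary.\<close>
definition CXZ :: "'a list set \<Rightarrow> ((nat \<Rightarrow> 'a) \<Rightarrow> int) set" where
  "CXZ T = {f. (\<forall>p\<in>boundary T. \<exists>n. \<forall>q\<in>boundary T. pref q n = pref p n \<longrightarrow> f q = f p)
              \<and> (\<forall>p. p \<notin> boundary T \<longrightarrow> f p = 0)}"

definition chi :: "'a list set \<Rightarrow> 'a list \<Rightarrow> (nat \<Rightarrow> 'a) \<Rightarrow> int" where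
  "chi T v p = (if p \<in> boundary T \<and> through p v then 1 else 0)"

definition is_hom :: "'a list set \<Rightarrow> (((nat \<Rightarrow> 'a) \<Rightarrow> int) \<Rightarrow> int) \<Rightarrow> bool" where
  "is_hom T \<phi> \<longleftrightarrow> (\<forall>f\<in>CXZ T. \<forall>g\<in>CXZ T. \<phi> (\<lambda>p. f p + g p) = \<phi> f + \<phi> g)"

definition horizontal :: "'a list set \<Rightarrow> 'a list \<Rightarrow> 'a list \<Rightarrow> bool" where
  "horizontal T w1 w2 \<longleftrightarrow> w1 \<in> T \<and> w2 \<in> T \<and> w1 \<noteq> w2
     \<and> (\<exists>v. w1 \<in> succs T v \<and> w2 \<in> succs T v)"

definition choice_fun :: "'a list set \<Rightarrow> ('a list \<Rightarrow> (nat \<Rightarrow> 'a)) \<Rightarrow> bool" where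
  "choice_fun T \<tau> \<longleftrightarrow>
     (\<forall>v\<in>T. \<tau> v \<in> boundary T \<and> through (\<tau> v) v)
     \<and> (\<forall>v\<in>T. \<forall>w\<in>T. strict_prefix w v \<longrightarrow> (\<tau> w = \<tau> v \<longleftrightarrow> through (\<tau> w) v))"

text \<open>An oriented set of horizontal edges (with multiplicities) is encoded by
  m w1 w2 = number of edges h in H+ with s(h) = w1, r(h) = w2; H- consists of
  the opposite edges.\<close>
definition edge_mult_ok :: "'a list set \<Rightarrow> ('a list \<Rightarrow> 'a list \<Rightarrow> nat) \<Rightarrow> bool" where
  "edge_mult_ok T m \<longleftrightarrow> (\<forall>w1 w2. m w1 w2 > 0 \<longrightarrow> horizontal T w1 w2)"

definition contrib_edges ::
  "'a list set \<Rightarrow> ('a list \<Rightarrow> (nat \<Rightarrow> 'a)) \<Rightarrow> ('a list \<Rightarrow> 'a list \<Rightarrow> nat) \<Rightarrow> 'a list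
    \<Rightarrow> ('a list \<times> 'a list) set" where
  "contrib_edges T \<tau> m v = {(w1, w2). m w1 w2 > 0 \<and> chi T v (\<tau> w1) \<noteq> chi T v (\<tau> w2)}"

definition varphi ::
  "'a list set \<Rightarrow> ('a list \<Rightarrow> (nat \<Rightarrow> 'a)) \<Rightarrow> ('a list \<Rightarrow> 'a list \<Rightarrow> nat) \<Rightarrow> 'a list \<Rightarrow> int" where
  "varphi T \<tau> m v = (\<Sum>(w1, w2)\<in>contrib_edges T \<tau> m v.
       int (m w1 w2) * (chi T v (\<tau> w1) - chi T v (\<tau> w2)))"

end

theory Submission
  imports Defs
begin


definition cc :: "'a list set \<Rightarrow> 'a list \<Rightarrow> 'a list" where
  "cc T u = u @ [SOME a. u @ [a] \<in> T]"

fun W :: "'a list set \<Rightarrow> 'a list \<Rightarrow> nat \<Rightarrow> 'a list" where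
  "W T w 0 = []"
| "W T w (Suc n) = (if Suc n \<le> length w then take (Suc n) w else cc T (W T w n))"

definition tau :: "'a list set \<Rightarrow> 'a list \<Rightarrow> nat \<Rightarrow> 'a" where
  "tau T w = (\<lambda>n. W T w (Suc n) ! n)"

declare W.simps(2)[simp del]

lemma len_W: "length (W T w n) = n"
  by (induction n) (auto simp: cc_def W.simps)

lemma W_take_le: "n \<le> length w \<Longrightarrow> W T w n = take n w"
  by (induction n) (auto simp: W.simps)

lemma W_Suc_prefix: "W T w n = take n (W T w (Suc n))"
proof (cases "Suc n \<le> length w")
  case True
  then show ?thesis by (simp add: W_take_le min_def W.simps)
next
  case False
  then have "W T w (Suc n) = W T w n @ [SOME a. W T w n @ [a] \<in> T]" by (simp add: W.simps(2) cc_def)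
  then show ?thesis by (simp add: len_W)
qed

lemma W_take: "n \<le> k \<Longrightarrow> W T w n = take n (W T w k)"
proof (induction k rule: dec_induct)
  case base
  then show ?case by (simp add: len_W)
next
  case (step k)
  then show ?case by (metis W_Suc_prefix take_take min_absorb1)
qed

lemma pref_tau: "pref (tau T w) n = W T w n"
proof (rule nth_equalityI)
  show "length (pref (tau T w) n) = length (W T w n)" by (simp add: pref_def len_W)
next
  fix i assume "i < length (pref (tau T w) n)"
  then have i: "i < n" by (simp add: pref_def)
  have "W T w (Suc i) = take (Suc i) (W T w n)" by (rule W_take) (use i in simp)
  then have "W T w (Suc i) ! i = W T w n ! i" by (metis nth_take lessI)
  then show "pref (tau T w) n ! i = W T w n ! i" using i by (simp add: pref_def tau_def)
qed

lemma W_Suc_big: "length w \<le> n \<Longrightarrow> W T w (Suc n) = cc T (W T w n)"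
  by (simp add: W.simps)

lemma through_tau: "through (tau T w) v \<longleftrightarrow> W T w (length v) = v"
  by (simp add: through_def pref_tau)

lemma pref_take: "n \<le> k \<Longrightarrow> pref p n = take n (pref p k)"
  by (simp add: pref_def take_map)

locale tr =
  fixes T :: "'a list set"
  assumes tree: "is_tree T"
begin

lemma app_in: "xs @ ys \<in> T \<Longrightarrow> xs \<in> T"
proof (induction ys rule: rev_induct)
  case Nil then show ?case by simp
next
  case (snoc y ys)
  then show ?case using tree unfolding is_tree_def by (metis append_assoc)
qed

lemma take_in: "v \<in> T \<Longrightarrow> take n v \<in> T"
  using app_in[of "take n v" "drop n v"] by simp

lemma root_in: "[] \<in> T" using tree by (simp add: is_tree_def)

lemma succs_fin: "u \<in> T \<Longrightarrow> finite (succs T u)" using tree by (simp add: is_tree_def)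

lemma succs_ne: "u \<in> T \<Longrightarrow> succs T u \<noteq> {}" using tree by (simp add: is_tree_def)

lemma cc_in: assumes "u \<in> T" shows "cc T u \<in> T" "cc T u \<in> succs T u"
proof -
  obtain a where "u @ [a] \<in> T" using succs_ne[OF assms] unfolding succs_def by auto
  then have "u @ [SOME a. u @ [a] \<in> T] \<in> T" by (rule someI)
  then show "cc T u \<in> T" "cc T u \<in> succs T u" by (auto simp: cc_def succs_def)
qed

lemma W_in: "w \<in> T \<Longrightarrow> W T w n \<in> T"
  by (induction n) (auto simp: root_in take_in cc_in W.simps)

lemma tau_bd: "w \<in> T \<Longrightarrow> tau T w \<in> boundary T"
  by (simp add: boundary_def pref_tau W_in)

lemma tau_through: "w \<in> T \<Longrightarrow> through (tau T w) w"
  by (simp add: through_tau W_take_le)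

lemma choice: "choice_fun T (tau T)"
  unfolding choice_fun_def
proof (intro conjI ballI impI)
  fix v assume "v \<in> T"
  then show "tau T v \<in> boundary T" "through (tau T v) v" by (auto simp: tau_bd tau_through)
next
  fix v w assume v: "v \<in> T" and w: "w \<in> T" and sp: "strict_prefix w v"
  have lwv: "length w < length v" using sp by (simp add: prefix_length_less)
  show "tau T w = tau T v \<longleftrightarrow> through (tau T w) v"
  proof
    assume "tau T w = tau T v" then show "through (tau T w) v" using v by (simp add: tau_through)
  next
    assume "through (tau T w) v"
    then have wv: "W T w (length v) = v" by (simp add: through_tau)
    have "W T w n = W T v n" for n
    proof (induction n)
      case 0 then show ?case by (simp add: W.simps)
    next
      case (Suc n)
      show ?case
      proof (cases "Suc n \<le> length v")
        case True
        then have "W T w (Suc n) = take (Suc n) (W T w (length v))" by (rule W_take)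
        then show ?thesis using True wv by (simp add: W_take_le)
      next
        case False
        then show ?thesis using Suc lwv by (simp add: W.simps)
      qed
    qed
    then show "tau T w = tau T v" by (simp add: tau_def)
  qed
qed

end



lemma pref_Suc: "pref p (Suc n) = pref p n @ [p n]"
  by (simp add: pref_def)

lemma length_pref[simp]: "length (pref p n) = n" by (simp add: pref_def)

lemma chi_CXZ: "chi T v \<in> CXZ T"
  unfolding CXZ_def chi_def through_def
  by (auto intro!: exI[of _ "length v"])

lemma CXZ_add: assumes "f \<in> CXZ T" "g \<in> CXZ T" shows "(\<lambda>p. f p + g p) \<in> CXZ T"
  unfolding CXZ_def
proof (intro CollectI conjI ballI allI impI)
  fix p assume p: "p \<in> boundary T"
  obtain n1 where n1: "\<forall>q\<in>boundary T. pref q n1 = pref p n1 \<longrightarrow> f q = f p"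
    using assms(1) p unfolding CXZ_def by blast
  obtain n2 where n2: "\<forall>q\<in>boundary T. pref q n2 = pref p n2 \<longrightarrow> g q = g p"
    using assms(2) p unfolding CXZ_def by blast
  show "\<exists>n. \<forall>q\<in>boundary T. pref q n = pref p n \<longrightarrow> f q + g q = f p + g p"
  proof (intro exI[of _ "max n1 n2"] ballI impI)
    fix q assume "q \<in> boundary T" "pref q (max n1 n2) = pref p (max n1 n2)"
    moreover have "pref q n1 = pref p n1" "pref q n2 = pref p n2"
      using calculation(2) pref_take[of n1 "max n1 n2"] pref_take[of n2 "max n1 n2"] by (metis max.cobounded1 max.cobounded2)+
    ultimately show "f q + g q = f p + g p" using n1 n2 by simp
  qed
next
  fix p assume "p \<notin> boundary T"
  then show "f p + g p = 0" using assms unfolding CXZ_def by simp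
qed

lemma CXZ_zero: "(\<lambda>p. 0) \<in> CXZ T" unfolding CXZ_def by auto

context tr
begin

lemma chi_split: assumes u: "u \<in> T" shows "chi T u = (\<lambda>p. \<Sum>w\<in>succs T u. chi T w p)"
proof
  fix p
  show "chi T u p = (\<Sum>w\<in>succs T u. chi T w p)"
  proof (cases "p \<in> boundary T")
    case False then show ?thesis by (simp add: chi_def)
  next
    case True
    define w0 where "w0 = pref p (Suc (length u))"
    have "(\<Sum>w\<in>succs T u. chi T w p) = (\<Sum>w\<in>succs T u. if w = w0 then 1 else 0)"
    proof (rule sum.cong)
      fix w assume "w \<in> succs T u"
      then have "length w = Suc (length u)" by (auto simp: succs_def)
      then show "chi T w p = (if w = w0 then 1 else 0)"
        using True by (auto simp: chi_def through_def w0_def)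
    qed simp
    also have "\<dots> = (if w0 \<in> succs T u then 1 else 0)"
      using succs_fin[OF u] by (simp add: sum.delta')
    also have "\<dots> = chi T u p"
    proof -
      have w0: "w0 = pref p (length u) @ [p (length u)]" by (simp add: w0_def pref_Suc)
      have "w0 \<in> T" using True by (simp add: boundary_def w0_def)
      have "w0 \<in> succs T u \<longleftrightarrow> through p u"
      proof
        assume "w0 \<in> succs T u" then show "through p u" using w0 by (auto simp: succs_def through_def)
      next
        assume "through p u" then show "w0 \<in> succs T u" using w0 \<open>w0 \<in> T\<close> by (auto simp: succs_def through_def)
      qed
      then show ?thesis using True by (simp add: chi_def)
    qed
    finally show ?thesis by simp
  qed
qed

end

locale trphi = tr T for T :: "'a list set" +
  fixes \<phi> :: "((nat \<Rightarrow> 'a) \<Rightarrow> int) \<Rightarrow> int"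
  assumes hom: "is_hom T \<phi>"
    and root0: "\<phi> (chi T []) = 0"
begin

lemma phi_zero: "\<phi> (\<lambda>p. 0) = 0"
  using hom CXZ_zero[of T] unfolding is_hom_def by fastforce

lemma phi_sum: "finite S \<Longrightarrow> (\<forall>i\<in>S. f i \<in> CXZ T) \<Longrightarrow>
   (\<lambda>p. \<Sum>i\<in>S. f i p) \<in> CXZ T \<and> \<phi> (\<lambda>p. \<Sum>i\<in>S. f i p) = (\<Sum>i\<in>S. \<phi> (f i))"
proof (induction S rule: finite_induct)
  case empty then show ?case by (simp add: CXZ_zero phi_zero)
next
  case (insert x F)
  then have A: "(\<lambda>p. \<Sum>i\<in>F. f i p) \<in> CXZ T" "\<phi> (\<lambda>p. \<Sum>i\<in>F. f i p) = (\<Sum>i\<in>F. \<phi> (f i))"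
    and B: "f x \<in> CXZ T" by auto
  have "(\<lambda>p. f x p + (\<Sum>i\<in>F. f i p)) \<in> CXZ T" using CXZ_add[OF B A(1)] .
  moreover have "\<phi> (\<lambda>p. f x p + (\<Sum>i\<in>F. f i p)) = \<phi> (f x) + \<phi> (\<lambda>p. \<Sum>i\<in>F. f i p)"
  proof -
    have "\<forall>f\<in>CXZ T. \<forall>g\<in>CXZ T. \<phi> (\<lambda>p. f p + g p) = \<phi> f + \<phi> g" using hom unfolding is_hom_def .
    then have "\<forall>g\<in>CXZ T. \<phi> (\<lambda>p. f x p + g p) = \<phi> (f x) + \<phi> g" using B by (rule bspec)
    then show ?thesis using A(1) by (rule bspec)
  qed
  ultimately show ?case using insert A by simp
qed

definition a where "a v = \<phi> (chi T v)"

lemma a_add: "u \<in> T \<Longrightarrow> a u = (\<Sum>w\<in>succs T u. a w)"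
proof -
  assume u: "u \<in> T"
  have "\<phi> (chi T u) = \<phi> (\<lambda>p. \<Sum>w\<in>succs T u. chi T w p)" using chi_split[OF u] by simp
  also have "\<dots> = (\<Sum>w\<in>succs T u. \<phi> (chi T w))"
    using phi_sum[of "succs T u" "chi T"] succs_fin[OF u] chi_CXZ by blast
  finally show ?thesis by (simp add: a_def)
qed

lemma a_root: "a [] = 0" using root0 by (simp add: a_def)

end



context trphi
begin

definition mm where "mm w1 w2 = (if w1 \<in> T \<and> w1 \<noteq> [] \<and> w2 = cc T (butlast w1) \<and> w1 \<noteq> w2 then nat (a w1)
   else if w2 \<in> T \<and> w2 \<noteq> [] \<and> w1 = cc T (butlast w2) \<and> w1 \<noteq> w2 then nat (- a w2) else 0)"

lemma butlast_in: "w \<in> T \<Longrightarrow> butlast w \<in> T"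
  by (metis app_in append_butlast_last_id butlast.simps(1))

lemma in_succs_butlast: "w \<in> T \<Longrightarrow> w \<noteq> [] \<Longrightarrow> w \<in> succs T (butlast w)"
  unfolding succs_def by (metis (mono_tags, lifting) append_butlast_last_id mem_Collect_eq)

lemma mm_ok: "edge_mult_ok T mm"
  unfolding edge_mult_ok_def
proof (intro allI impI)
  fix w1 w2 assume pos: "mm w1 w2 > 0"
  show "horizontal T w1 w2"
  proof (cases "w1 \<in> T \<and> w1 \<noteq> [] \<and> w2 = cc T (butlast w1) \<and> w1 \<noteq> w2")
    case True
    then show ?thesis unfolding horizontal_def
      using cc_in[OF butlast_in] in_succs_butlast by blast
  next
    case False
    then have "w2 \<in> T \<and> w2 \<noteq> [] \<and> w1 = cc T (butlast w2) \<and> w1 \<noteq> w2"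
      using pos unfolding mm_def by (auto split: if_splits)
    then show ?thesis unfolding horizontal_def
      using cc_in[OF butlast_in] in_succs_butlast by blast
  qed
qed

lemma chi_tau: "w \<in> T \<Longrightarrow> chi T v (tau T w) = (if W T w (length v) = v then 1 else 0)"
  by (simp add: chi_def tau_bd through_tau)

definition E where "E v = (\<Union>k<length v. succs T (take k v) \<times> succs T (take k v))"

lemma E_fin: "v \<in> T \<Longrightarrow> finite (E v)"
  unfolding E_def by (auto intro!: finite_cartesian_product succs_fin take_in)

lemma succs_len: "w \<in> succs T p \<Longrightarrow> length w = Suc (length p) \<and> take (length p) w = p \<and> w \<in> T"
  by (auto simp: succs_def)

lemma contrib_sub: assumes v: "v \<in> T" shows "contrib_edges T (tau T) mm v \<subseteq> E v"
proof
  fix e assume e: "e \<in> contrib_edges T (tau T) mm v"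
  obtain w1 w2 where e12: "e = (w1, w2)" by (cases e)
  have pos: "mm w1 w2 > 0" and df: "chi T v (tau T w1) \<noteq> chi T v (tau T w2)"
    using e e12 by (auto simp: contrib_edges_def)
  have "horizontal T w1 w2" using mm_ok pos by (simp add: edge_mult_ok_def)
  then obtain p where p1: "w1 \<in> succs T p" and p2: "w2 \<in> succs T p" by (auto simp: horizontal_def)
  note L1 = succs_len[OF p1] and L2 = succs_len[OF p2]
  have df2: "(W T w1 (length v) = v) \<noteq> (W T w2 (length v) = v)"
    using df L1 L2 by (auto simp: chi_tau split: if_splits)
  have lp: "length p < length v"
  proof (rule ccontr)
    assume "\<not> length p < length v"
    then have le: "length v \<le> length p" by simp
    have "W T w (length v) = take (length v) p" if "take (length p) w = p" "length w = Suc (length p)" for w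
    proof -
      have "W T w (length v) = take (length v) w" using le that by (simp add: W_take_le)
      also have "\<dots> = take (length v) (take (length p) w)" using le by (simp add: min_absorb1)
      finally show ?thesis using that by simp
    qed
    then have "W T w1 (length v) = take (length v) p" "W T w2 (length v) = take (length v) p"
      using L1 L2 by auto
    then show False using df2 by simp
  qed
  have tp: "take (length p) v = p"
  proof -
    obtain w where w: "w \<in> succs T p" "W T w (length v) = v"
      using df2 p1 p2 by blast
    note L = succs_len[OF w(1)]
    have "take (length w) v = W T w (length w)"
      using w(2) lp L W_take[of "length w" "length v" T w] by simp
    also have "\<dots> = w" by (simp add: W_take_le)
    finally have "take (length w) v = w" .
    then have "take (length p) (take (length w) v) = take (length p) w" by simp
    then show ?thesis using L by (simp add: min_absorb1)
  qed
  show "e \<in> E v" unfolding E_def e12 using lp tp p1 p2 by (intro UN_I[of "length p"]) auto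
qed

definition G where "G v = (\<lambda>(w1, w2). int (mm w1 w2) * (chi T v (tau T w1) - chi T v (tau T w2)))"

lemma varphi_E: assumes v: "v \<in> T" shows "varphi T (tau T) mm v = sum (G v) (E v)"
  unfolding varphi_def G_def[symmetric]
proof (rule sum.mono_neutral_left[OF E_fin[OF v] contrib_sub[OF v]])
  show "\<forall>i\<in>E v - contrib_edges T (tau T) mm v. G v i = 0"
    by (auto simp: G_def contrib_edges_def)
qed

end



context trphi
begin

lemma E_snoc: "E (u @ [x]) = E u \<union> (succs T u \<times> succs T u)"
proof -
  have "E (u @ [x]) = (\<Union>k\<in>insert (length u) {..<length u}. succs T (take k (u @ [x])) \<times> succs T (take k (u @ [x])))"
    unfolding E_def by (simp add: lessThan_Suc)
  also have "\<dots> = (succs T u \<times> succs T u) \<union> (\<Union>k<length u. succs T (take k u) \<times> succs T (take k u))"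
    by simp
  finally show ?thesis unfolding E_def by blast
qed

lemma E_disj: "E u \<inter> (succs T u \<times> succs T u) = {}"
proof -
  have "length w \<le> length u" if "w \<in> succs T (take k u)" "k < length u" for w k
    using succs_len[OF that(1)] that(2) by simp
  moreover have "length w = Suc (length u)" if "w \<in> succs T u" for w using succs_len[OF that] by simp
  ultimately show ?thesis unfolding E_def by fastforce
qed

lemma key: "length w \<le> length u \<Longrightarrow>
   (W T w (Suc (length u)) = u @ [x]) \<longleftrightarrow> (W T w (length u) = u \<and> cc T u = u @ [x])"
  using W_Suc_big[of w "length u" T] by (auto simp: cc_def)

lemma G_old: assumes "e \<in> E u" shows "G (u @ [x]) e = (if cc T u = u @ [x] then G u e else 0)"
proof -
  obtain w1 w2 k where e: "e = (w1, w2)" and k: "k < length u"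
    and s1: "w1 \<in> succs T (take k u)" and s2: "w2 \<in> succs T (take k u)"
    using assms unfolding E_def by auto
  have c: "chi T (u @ [x]) (tau T w) = (if cc T u = u @ [x] then chi T u (tau T w) else 0)"
    if "w \<in> succs T (take k u)" for w
  proof -
    have "w \<in> T" "length w \<le> length u" using succs_len[OF that] k by auto
    then show ?thesis using key[of w u x] by (simp add: chi_tau)
  qed
  show ?thesis using c[OF s1] c[OF s2] by (simp add: G_def e)
qed

lemma G_new: assumes s1: "w1 \<in> succs T u" and s2: "w2 \<in> succs T u"
  shows "G (u @ [x]) (w1, w2) = int (mm w1 w2) * ((if w1 = u @ [x] then 1 else 0) - (if w2 = u @ [x] then 1 else 0))"
proof -
  have c: "chi T (u @ [x]) (tau T w) = (if w = u @ [x] then 1 else 0)" if "w \<in> succs T u" for w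
  proof -
    have "w \<in> T" "length w = Suc (length u)" using succs_len[OF that] by auto
    moreover have "W T w (length w) = w" by (simp add: W_take_le)
    ultimately show ?thesis by (simp add: chi_tau)
  qed
  show ?thesis using c[OF s1] c[OF s2] by (simp add: G_def)
qed

lemma main: "v \<in> T \<Longrightarrow> sum (G v) (E v) = a v"
proof (induction v rule: rev_induct)
  case Nil
  then show ?case by (simp add: E_def a_root)
next
  case (snoc x u)
  define v where "v = u @ [x]"
  have vT: "v \<in> T" using snoc v_def by simp
  have uT: "u \<in> T" using vT v_def app_in by blast
  define C where "C = succs T u"
  have Cfin: "finite C" using succs_fin[OF uT] C_def by simp
  have vC: "v \<in> C" using vT v_def C_def by (simp add: succs_def)
  have ccC: "cc T u \<in> C" using cc_in[OF uT] C_def by simp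
  have IH: "sum (G u) (E u) = a u" using snoc uT by simp
  have "sum (G v) (E v) = sum (G v) (E u) + sum (G v) (C \<times> C)"
    unfolding v_def E_snoc C_def
    by (rule sum.union_disjoint) (use E_disj[of u] E_fin[OF uT] succs_fin[OF uT] in auto)
  also have "sum (G v) (E u) = (if cc T u = v then a u else 0)"
    using G_old[of _ u x] IH unfolding v_def by (simp add: sum.If_cases) 
  also have "sum (G v) (C \<times> C) = (\<Sum>w1\<in>C. \<Sum>w2\<in>C. int (mm w1 w2) * ((if w1 = v then 1 else 0) - (if w2 = v then 1 else 0)))"
  proof -
    have "sum (G v) (C \<times> C) = (\<Sum>(w1,w2)\<in>C \<times> C. int (mm w1 w2) * ((if w1 = v then 1 else 0) - (if w2 = v then 1 else 0)))"
      by (rule sum.cong) (auto simp: G_new C_def v_def)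
    then show ?thesis by (simp add: sum.cartesian_product)
  qed
  also have "\<dots> = (\<Sum>w2\<in>C. int (mm v w2)) - (\<Sum>w1\<in>C. int (mm w1 v))"
  proof -
    have e1: "(\<Sum>w1\<in>C. \<Sum>w2\<in>C. int (mm w1 w2) * ((if w1 = v then 1 else 0) - (if w2 = v then 1 else 0)))
       = (\<Sum>w1\<in>C. \<Sum>w2\<in>C. (if w1 = v then int (mm w1 w2) else 0)) - (\<Sum>w1\<in>C. \<Sum>w2\<in>C. (if w2 = v then int (mm w1 w2) else 0))"
    proof -
      have pw: "\<And>A B (k::int). k * ((if A then 1 else 0) - (if B then 1 else 0)) = (if A then k else 0) - (if B then k else 0)"
        by simp
      show ?thesis by (simp only: pw sum_subtractf)
    qed
    have e2: "(\<Sum>w1\<in>C. \<Sum>w2\<in>C. (if w1 = v then int (mm w1 w2) else 0)) = (\<Sum>w2\<in>C. int (mm v w2))"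
    proof -
      have "(\<Sum>w1\<in>C. \<Sum>w2\<in>C. (if w1 = v then int (mm w1 w2) else 0)) = (\<Sum>w1\<in>C. if w1 = v then (\<Sum>w2\<in>C. int (mm w1 w2)) else 0)"
        by (rule sum.cong) auto
      also have "\<dots> = (\<Sum>w2\<in>C. int (mm v w2))" using Cfin vC by (simp add: sum.delta')
      finally show ?thesis .
    qed
    have e3: "(\<Sum>w1\<in>C. \<Sum>w2\<in>C. (if w2 = v then int (mm w1 w2) else 0)) = (\<Sum>w1\<in>C. int (mm w1 v))"
      by (rule sum.cong) (use Cfin vC in \<open>simp_all add: sum.delta'\<close>)
    show ?thesis using e1 e2 e3 by simp
  qed
  finally have S: "sum (G v) (E v) = (if cc T u = v then a u else 0) + ((\<Sum>w2\<in>C. int (mm v w2)) - (\<Sum>w1\<in>C. int (mm w1 v)))" .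
  have bl: "butlast v = u" "v \<noteq> []" using v_def by auto
  have bC: "w \<in> T \<and> w \<noteq> [] \<and> butlast w = u" if "w \<in> C" for w
    using succs_len[of w u] that C_def by (auto simp: succs_def)
  show ?case
  proof (cases "cc T u = v")
    case False
    have m1: "int (mm v w2) = (if w2 = cc T u then int (nat (a v)) else 0)" if "w2 \<in> C" for w2
      using bC[OF that] bl vT False unfolding mm_def by auto
    have m2: "int (mm w1 v) = (if w1 = cc T u then int (nat (- a v)) else 0)" if "w1 \<in> C" for w1
      using bC[OF that] bl vT False unfolding mm_def by auto
    have "sum (G v) (E v) = int (nat (a v)) - int (nat (- a v))"
      using S False Cfin ccC by (simp add: m1 m2 sum.delta' cong: sum.cong)
    then show ?thesis using v_def by simp
  next
    case True
    have m1: "int (mm v w2) = (if w2 \<noteq> v then int (nat (- a w2)) else 0)" if "w2 \<in> C" for w2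
      using bC[OF that] bl vT True unfolding mm_def by auto
    have m2: "int (mm w1 v) = (if w1 \<noteq> v then int (nat (a w1)) else 0)" if "w1 \<in> C" for w1
      using bC[OF that] bl vT True unfolding mm_def by auto
    have "(\<Sum>w2\<in>C. int (mm v w2)) - (\<Sum>w1\<in>C. int (mm w1 v)) = (\<Sum>w\<in>C. (if w \<noteq> v then - a w else 0))"
      by (simp add: m1 m2 sum_subtractf[symmetric] cong: sum.cong) (intro sum.cong; auto)
    also have "\<dots> = - (\<Sum>w\<in>C - {v}. a w)"
    proof -
      have "{w. w \<noteq> v} = - {v}" by auto
      then show ?thesis using Cfin by (simp add: sum.If_cases sum_negf Diff_eq)
    qed
    also have "\<dots> = - (a u - a v)"
    proof -
      have "a u = (\<Sum>w\<in>C. a w)" unfolding C_def by (rule a_add[OF uT])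
      then show ?thesis using sum.remove[OF Cfin vC, of a] by linarith
    qed
    finally show ?thesis using S True v_def by simp
  qed
qed

end

theorem proposition7p3:
  fixes T :: "'a list set" and \<phi> :: "((nat \<Rightarrow> 'a) \<Rightarrow> int) \<Rightarrow> int"
  assumes "is_tree T"
    and "infinite (boundary T)"
    and "is_hom T \<phi>"
    and "\<phi> (chi T []) = 0"
  shows "\<exists>m \<tau>. edge_mult_ok T m \<and> choice_fun T \<tau>
           \<and> (\<forall>v\<in>T. finite (contrib_edges T \<tau> m v) \<and> varphi T \<tau> m v = \<phi> (chi T v))"
proof -
  interpret trphi T \<phi> using assms by unfold_locales auto
  show ?thesis
  proof (intro exI conjI ballI)
    show "edge_mult_ok T mm" by (rule mm_ok)
    show "choice_fun T (tau T)" by (rule choice)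
  next
    fix v assume v: "v \<in> T"
    show "finite (contrib_edges T (tau T) mm v)" using E_fin[OF v] contrib_sub[OF v] by (rule finite_subset[rotated])
    show "varphi T (tau T) mm v = \<phi> (chi T v)" using varphi_E[OF v] main[OF v] by (simp add: a_def)
  qed
qed

end
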